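(* Let $f:\mathbb{Z}^3\to\mathbb{C}$ and define $g(k_1,k_2,k_3,k_4)=\sum_{(l_1,l_2,l_3)}^{(k_1,k_2,k_3,k_4)}f(l_1,l_2,l_3)$. Then \begin{multline*} T'_{2,3}\, g(k_1,k_2,k_3,k_4) = - \frac{1}{2} \left( \sum_{l_1=k_2+1}^{k_3} \sum_{l_2=k_2+1}^{k_3} \sum_{l_3=k_2}^{k_4} T'_{1,2} f(l_1,l_2,l_3) + \sum_{l_1=k_1}^{k_2+1} \sum_{l_2=k_2}^{k_3-1} \sum_{l_3=k_2}^{k_3-1} T'_{2,3} f(l_1,l_2,l_3) \right) \\ + \frac{1}{2} \left( \sum_{l_1=k_2}^{k_3-1} \sum_{l_2=k_2}^{k_3-1} \Delta_2 (\operatorname{id} + E_1) T'_{1,2} f(l_1,l_2,k_2) - \sum_{l_2=k_2}^{k_3-1} \sum_{l_3=k_2}^{k_3-1} \Delta_2 (\operatorname{id} + E_3) T'_{2,3} f(k_2+1,l_2,l_3) \right) \\ + \frac{1}{2} \Big( T'_{1,2} f(k_2,k_2,k_2+1) - T'_{1,2} f(k_2,k_2,k_3+1) + T'_{2,3} f(k_2,k_2,k_2) - T'_{2,3} f(k_3,k_2,k_2) \Big) \\ - T'_{1,2} f(k_2,k_3,k_2+1) - T'_{2,3} f(k_2,k_2,k_3). \end{multline*} Moreover, for every function $h:\mathbb{Z}^2\to\mathbb{C}$, $$T'_{1,2}\left(\sum_{(l_1,l_2)}^{(k_1,k_2,k_3)}h(l_1,l_2)\right)(k_1,k_2,k_3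)=-\frac12\sum_{l_1=k_1}^{k_2-1}\sum_{l_2=k_1}^{k_2-1}T'_{1,2}\,h(l_1,l_2).$$
   Context: Extended interval sums: $\sum_{i=a}^b F(i)=F(a)+\cdots+F(b)$ if $a\le b$, $=0$ if $b=a-1$, and $=-F(b+1)-\cdots-F(a-1)$ if $b+1\le a-1$. For functions $A$ on $\mathbb{Z}^{m-1}$ and $(k_1,\ldots,k_m)\in\mathbb{Z}^m$ define recursively $\sum_{(l_1)}^{(k_1,k_2)}A(l_1)=\sum_{l_1=k_1}^{k_2}A(l_1)$ and, for $m>2$, $$\sum_{(l_1,\ldots,l_{m-1})}^{(k_1,\ldots,k_m)}A=\sum_{(l_1,\ldots,l_{m-2})}^{(k_1,\ldots,k_{m-1})}\sum_{l_{m-1}=k_{m-1}+1}^{k_m}A(l_1,\ldots,l_{m-1})+\sum_{(l_1,\ldots,l_{m-2})}^{(k_1,\ldots,k_{m-1}-1)}A(l_1,\ldots,l_{m-2},k_{m-1}).$$ For a function of several integer variables, $E_j$ is the shift in the $j$-th variable ($E_jF(\ldots,x_j,\ldots)=F(\ldots,x_j+1,\ldots)$), $\Delta_j=E_j-\operatorname{id}$, and $S_{j,j+1}$ swaps the $j$-th and $(j+1)$-st variables; products of operators are compositions. Define $T'_{j,j+1}=(\operatorname{id}+S_{j,j+1})(\operatorname{id}+E_{j+1}\Delta_j)$. Notation such as $T'_{1,2}f(k_2,k_2,k_2+1)$ or $\Delta_2(\operatorname{id}+E_1)T'_{1,2}f(l_1,l_2,k_2)$ means: apply the operator to $f$ as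 a function of all its variables, then evaluate at the indicated arguments. *)

theory Defs
  imports Complex_Main
begin

definition esum :: "(int \<Rightarrow> complex) \<Rightarrow> int \<Rightarrow> int \<Rightarrow> complex" where
  "esum F a b = (if a \<le> b then (\<Sum>i\<in>{a..b}. F i) else - (\<Sum>i\<in>{b+1..a-1}. F i))"

definition msum2 :: "(int \<Rightarrow> complex) \<Rightarrow> int \<Rightarrow> int \<Rightarrow> complex" where
  "msum2 A k1 k2 = esum A k1 k2"

definition msum3 :: "(int \<Rightarrow> int \<Rightarrow> complex) \<Rightarrow> int \<Rightarrow> int \<Rightarrow> int \<Rightarrow> complex" where
  "msum3 A k1 k2 k3 =
     msum2 (\<lambda>l1. esum (\<lambda>l2. A l1 l2) (k2+1) k3) k1 k2 + msum2 (\<lambda>l1. A l1 k2) k1 (k2-1)"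

definition msum4 :: "(int \<Rightarrow> int \<Rightarrow> int \<Rightarrow> complex) \<Rightarrow> int \<Rightarrow> int \<Rightarrow> int \<Rightarrow> int \<Rightarrow> complex" where
  "msum4 A k1 k2 k3 k4 =
     msum3 (\<lambda>l1 l2. esum (\<lambda>l3. A l1 l2 l3) (k3+1) k4) k1 k2 k3
   + msum3 (\<lambda>l1 l2. A l1 l2 k3) k1 k2 (k3-1)"

definition E1_2 :: "(int \<Rightarrow> int \<Rightarrow> complex) \<Rightarrow> int \<Rightarrow> int \<Rightarrow> complex" where
  "E1_2 F = (\<lambda>x y. F (x+1) y)"
definition E2_2 :: "(int \<Rightarrow> int \<Rightarrow> complex) \<Rightarrow> int \<Rightarrow> int \<Rightarrow> complex" where
  "E2_2 F = (\<lambda>x y. F x (y+1))"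
definition D1_2 :: "(int \<Rightarrow> int \<Rightarrow> complex) \<Rightarrow> int \<Rightarrow> int \<Rightarrow> complex" where
  "D1_2 F = (\<lambda>x y. E1_2 F x y - F x y)"
definition S12_2 :: "(int \<Rightarrow> int \<Rightarrow> complex) \<Rightarrow> int \<Rightarrow> int \<Rightarrow> complex" where
  "S12_2 F = (\<lambda>x y. F y x)"

definition E1_3 :: "(int \<Rightarrow> int \<Rightarrow> int \<Rightarrow> complex) \<Rightarrow> int \<Rightarrow> int \<Rightarrow> int \<Rightarrow> complex" where
  "E1_3 F = (\<lambda>x y z. F (x+1) y z)"
definition E2_3 :: "(int \<Rightarrow> int \<Rightarrow> int \<Rightarrow> complex) \<Rightarrow> int \<Rightarrow> int \<Rightarrow> int \<Rightarrow> complex" where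
  "E2_3 F = (\<lambda>x y z. F x (y+1) z)"
definition E3_3 :: "(int \<Rightarrow> int \<Rightarrow> int \<Rightarrow> complex) \<Rightarrow> int \<Rightarrow> int \<Rightarrow> int \<Rightarrow> complex" where
  "E3_3 F = (\<lambda>x y z. F x y (z+1))"
definition D1_3 :: "(int \<Rightarrow> int \<Rightarrow> int \<Rightarrow> complex) \<Rightarrow> int \<Rightarrow> int \<Rightarrow> int \<Rightarrow> complex" where
  "D1_3 F = (\<lambda>x y z. E1_3 F x y z - F x y z)"
definition D2_3 :: "(int \<Rightarrow> int \<Rightarrow> int \<Rightarrow> complex) \<Rightarrow> int \<Rightarrow> int \<Rightarrow> int \<Rightarrow> complex" where
  "D2_3 F = (\<lambda>x y z. E2_3 F x y z - F x y z)"
definition S12_3 :: "(int \<Rightarrow> int \<Rightarrow> int \<Rightarrow> complex) \<Rightarrow> int \<Rightarrow> int \<Rightarrow> int \<Rightarrow> complex" where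
  "S12_3 F = (\<lambda>x y z. F y x z)"
definition S23_3 :: "(int \<Rightarrow> int \<Rightarrow> int \<Rightarrow> complex) \<Rightarrow> int \<Rightarrow> int \<Rightarrow> int \<Rightarrow> complex" where
  "S23_3 F = (\<lambda>x y z. F x z y)"

definition E2_4 :: "(int \<Rightarrow> int \<Rightarrow> int \<Rightarrow> int \<Rightarrow> complex) \<Rightarrow> int \<Rightarrow> int \<Rightarrow> int \<Rightarrow> int \<Rightarrow> complex" where
  "E2_4 F = (\<lambda>x y z w. F x (y+1) z w)"
definition E3_4 :: "(int \<Rightarrow> int \<Rightarrow> int \<Rightarrow> int \<Rightarrow> complex) \<Rightarrow> int \<Rightarrow> int \<Rightarrow> int \<Rightarrow> int \<Rightarrow> complex" where
  "E3_4 F = (\<lambda>x y z w. F x y (z+1) w)"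
definition D2_4 :: "(int \<Rightarrow> int \<Rightarrow> int \<Rightarrow> int \<Rightarrow> complex) \<Rightarrow> int \<Rightarrow> int \<Rightarrow> int \<Rightarrow> int \<Rightarrow> complex" where
  "D2_4 F = (\<lambda>x y z w. E2_4 F x y z w - F x y z w)"
definition S23_4 :: "(int \<Rightarrow> int \<Rightarrow> int \<Rightarrow> int \<Rightarrow> complex) \<Rightarrow> int \<Rightarrow> int \<Rightarrow> int \<Rightarrow> int \<Rightarrow> complex" where
  "S23_4 F = (\<lambda>x y z w. F x z y w)"

text \<open>T'_{j,j+1} = (id + S_{j,j+1}) (id + E_{j+1} Delta_j), composition applied right to left.\<close>
definition Tp12_2 :: "(int \<Rightarrow> int \<Rightarrow> complex) \<Rightarrow> int \<Rightarrow> int \<Rightarrow> complex" where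
  "Tp12_2 F = (let G = (\<lambda>x y. F x y + E2_2 (D1_2 F) x y) in (\<lambda>x y. G x y + S12_2 G x y))"

definition Tp12_3 :: "(int \<Rightarrow> int \<Rightarrow> int \<Rightarrow> complex) \<Rightarrow> int \<Rightarrow> int \<Rightarrow> int \<Rightarrow> complex" where
  "Tp12_3 F = (let G = (\<lambda>x y z. F x y z + E2_3 (D1_3 F) x y z) in (\<lambda>x y z. G x y z + S12_3 G x y z))"

definition Tp23_3 :: "(int \<Rightarrow> int \<Rightarrow> int \<Rightarrow> complex) \<Rightarrow> int \<Rightarrow> int \<Rightarrow> int \<Rightarrow> complex" where
  "Tp23_3 F = (let G = (\<lambda>x y z. F x y z + E3_3 (D2_3 F) x y z) in (\<lambda>x y z. G x y z + S23_3 G x y z))"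

definition Tp23_4 :: "(int \<Rightarrow> int \<Rightarrow> int \<Rightarrow> int \<Rightarrow> complex) \<Rightarrow> int \<Rightarrow> int \<Rightarrow> int \<Rightarrow> int \<Rightarrow> complex" where
  "Tp23_4 F = (let G = (\<lambda>x y z w. F x y z w + E3_4 (D2_4 F) x y z w) in (\<lambda>x y z w. G x y z w + S23_4 G x y z w))"

end

theory Submission
  imports Defs
begin

lemma esum_empty: "esum F a (a - 1) = 0"
  by (simp add: esum_def)

lemma esum_single: "esum F c c = F c"
  by (simp add: esum_def)

lemma esum_Suc: "esum F a (b + 1) = esum F a b + F (b + 1)"
proof (cases "a \<le> b")
  case True
  have "{a..b+1} = insert (b+1) {a..b}" using True by auto
  moreover have "a \<le> b + 1" using True by simp
  ultimately show ?thesis using True by (simp add: esum_def add.commute)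
next
  case False
  show ?thesis
  proof (cases "a = b + 1")
    case True then show ?thesis by (simp add: esum_def)
  next
    case False2: False
    with False have ab: "b + 2 \<le> a" by simp
    have "{b+1..a-1} = insert (b+1) {b+2..a-1}" using ab by auto
    then show ?thesis using False ab by (simp add: esum_def add.commute)
  qed
qed

lemma esum_Suc': "esum F a b = esum F a (b - 1) + F b"
  using esum_Suc[of F a "b - 1"] by simp

lemma int_induct_all:
  fixes P :: "int \<Rightarrow> bool"
  assumes "P k" "\<And>i. P i \<Longrightarrow> P (i + 1)" "\<And>i. P i \<Longrightarrow> P (i - 1)"
  shows "P i"
  using assms by (induct i rule: int_induct[where k=k]) auto

lemma esum_split_gen: "esum F a b = esum F c b - esum F c (a - 1)"
proof (induct b rule: int_induct_all[where k="a - 1"])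
  case 1
  have "esum F c (a - 1) - esum F c (a - 1) = 0" by simp
  then show ?case by (simp add: esum_empty)
next
  case (2 i) then show ?case by (simp add: esum_Suc)
next
  case (3 i) then show ?case using esum_Suc'[of F a i] esum_Suc'[of F c i] by simp
qed

lemma esum_split: "esum F a b = esum F 0 b - esum F 0 (a - 1)"
  by (rule esum_split_gen)

lemma esum_add: "esum (\<lambda>x. F x + G x) a b = esum F a b + esum G a b"
  by (simp add: esum_def sum.distrib)

lemma esum_diff: "esum (\<lambda>x. F x - G x) a b = esum F a b - esum G a b"
  by (simp add: esum_def sum_subtractf)

lemma esum_shift: "esum (\<lambda>x. F (x + c)) a b = esum F (a + c) (b + c)"
proof (induct b rule: int_induct_all[where k="a - 1"])
  case 1
  then show ?case using esum_empty[of "\<lambda>x. F (x + c)" a] esum_empty[of F "a + c"]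
    by (simp add: algebra_simps)
next
  case (2 i) then show ?case using esum_Suc[of "\<lambda>x. F (x + c)" a i] esum_Suc[of F "a + c" "i + c"]
    by (simp add: algebra_simps)
next
  case (3 i) then show ?case using esum_Suc'[of "\<lambda>x. F (x + c)" a i] esum_Suc'[of F "a + c" "i + c"]
    by (simp add: algebra_simps)
qed

lemma esum_swap: "esum (\<lambda>x. esum (\<lambda>y. G x y) c d) a b = esum (\<lambda>y. esum (\<lambda>x. G x y) a b) c d"
proof (induct b rule: int_induct_all[where k="a - 1"])
  case 1
  then show ?case by (simp add: esum_empty esum_def)
next
  case (2 i) then show ?case by (simp add: esum_Suc esum_add)
next
  case (3 i) then show ?case using esum_Suc'[of "\<lambda>x. esum (\<lambda>y. G x y) c d" a i]
     esum_Suc'[of "\<lambda>x. G x _" a i]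
    by (simp add: esum_add)
qed

definition B3 :: "(int \<Rightarrow> int \<Rightarrow> int \<Rightarrow> complex) \<Rightarrow> int \<Rightarrow> int \<Rightarrow> int \<Rightarrow> int \<Rightarrow> int \<Rightarrow> int \<Rightarrow> complex" where
  "B3 F a1 b1 a2 b2 a3 b3 = esum (\<lambda>x. esum (\<lambda>y. esum (\<lambda>z. F x y z) a3 b3) a2 b2) a1 b1"

definition sh3 :: "int \<Rightarrow> int \<Rightarrow> int \<Rightarrow> (int \<Rightarrow> int \<Rightarrow> int \<Rightarrow> complex) \<Rightarrow> int \<Rightarrow> int \<Rightarrow> int \<Rightarrow> complex" where
  "sh3 a b c F = (\<lambda>x y z. F (x + a) (y + b) (z + c))"
definition sw12 :: "(int \<Rightarrow> int \<Rightarrow> int \<Rightarrow> complex) \<Rightarrow> int \<Rightarrow> int \<Rightarrow> int \<Rightarrow> complex" where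
  "sw12 F = (\<lambda>x y z. F y x z)"
definition sw23 :: "(int \<Rightarrow> int \<Rightarrow> int \<Rightarrow> complex) \<Rightarrow> int \<Rightarrow> int \<Rightarrow> int \<Rightarrow> complex" where
  "sw23 F = (\<lambda>x y z. F x z y)"
definition PP :: "(int \<Rightarrow> int \<Rightarrow> int \<Rightarrow> complex) \<Rightarrow> int \<Rightarrow> int \<Rightarrow> int \<Rightarrow> complex" where
  "PP F x y z = B3 F 0 x 0 y 0 z"

lemma B3_add: "B3 (\<lambda>x y z. F x y z + G x y z) a1 b1 a2 b2 a3 b3 = B3 F a1 b1 a2 b2 a3 b3 + B3 G a1 b1 a2 b2 a3 b3"
  by (simp add: B3_def esum_add)
lemma B3_diff: "B3 (\<lambda>x y z. F x y z - G x y z) a1 b1 a2 b2 a3 b3 = B3 F a1 b1 a2 b2 a3 b3 - B3 G a1 b1 a2 b2 a3 b3"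
  by (simp add: B3_def esum_diff)
lemma B3_sh: "B3 (sh3 a b c F) a1 b1 a2 b2 a3 b3 = B3 F (a1 + a) (b1 + a) (a2 + b) (b2 + b) (a3 + c) (b3 + c)"
proof -
  have i: "\<And>x y. esum (\<lambda>z. F (x + a) (y + b) (z + c)) a3 b3 = esum (\<lambda>z. F (x + a) (y + b) z) (a3 + c) (b3 + c)"
    by (rule esum_shift)
  have j: "\<And>x. esum (\<lambda>y. esum (\<lambda>z. F (x + a) (y + b) z) (a3 + c) (b3 + c)) a2 b2
     = esum (\<lambda>y. esum (\<lambda>z. F (x + a) y z) (a3 + c) (b3 + c)) (a2 + b) (b2 + b)"
    by (rule esum_shift[where F="\<lambda>y. esum (\<lambda>z. F (_ + a) y z) (a3 + c) (b3 + c)"])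
  have k: "esum (\<lambda>x. esum (\<lambda>y. esum (\<lambda>z. F (x + a) y z) (a3 + c) (b3 + c)) (a2 + b) (b2 + b)) a1 b1
     = esum (\<lambda>x. esum (\<lambda>y. esum (\<lambda>z. F x y z) (a3 + c) (b3 + c)) (a2 + b) (b2 + b)) (a1 + a) (b1 + a)"
    by (rule esum_shift[where F="\<lambda>x. esum (\<lambda>y. esum (\<lambda>z. F x y z) (a3 + c) (b3 + c)) (a2 + b) (b2 + b)"])
  show ?thesis unfolding B3_def sh3_def using i j k by simp
qed
lemma B3_sw12: "B3 (sw12 F) a1 b1 a2 b2 a3 b3 = B3 F a2 b2 a1 b1 a3 b3"
  unfolding B3_def sw12_def by (rule esum_swap)
lemma B3_sw23: "B3 (sw23 F) a1 b1 a2 b2 a3 b3 = B3 F a1 b1 a3 b3 a2 b2"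
  unfolding B3_def sw23_def by (rule arg_cong[where f="\<lambda>G. esum G a1 b1"], rule ext, rule esum_swap)

lemma B3_P: "B3 F a1 b1 a2 b2 a3 b3 =
   PP F b1 b2 b3 - PP F b1 b2 (a3 - 1) - PP F b1 (a2 - 1) b3 + PP F b1 (a2 - 1) (a3 - 1)
 - PP F (a1 - 1) b2 b3 + PP F (a1 - 1) b2 (a3 - 1) + PP F (a1 - 1) (a2 - 1) b3 - PP F (a1 - 1) (a2 - 1) (a3 - 1)"
proof -
  have L1: "B3 F a1 b1 a2 b2 a3 b3 = B3 F 0 b1 a2 b2 a3 b3 - B3 F 0 (a1 - 1) a2 b2 a3 b3"
    unfolding B3_def by (rule esum_split)
  have L2: "\<And>t. B3 F 0 t a2 b2 a3 b3 = B3 F 0 t 0 b2 a3 b3 - B3 F 0 t 0 (a2 - 1) a3 b3"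
    unfolding B3_def by (subst esum_split[of _ a2], simp add: esum_diff)
  have L3: "\<And>t s. B3 F 0 t 0 s a3 b3 = PP F t s b3 - PP F t s (a3 - 1)"
    unfolding PP_def B3_def by (subst esum_split[of _ a3], simp add: esum_diff)
  show ?thesis using L1 L2 L3 by simp
qed

lemma Tp12_3_eq: "Tp12_3 F = (\<lambda>x y z. F x y z + sh3 1 1 0 F x y z - sh3 0 1 0 F x y z
   + sw12 F x y z + sw12 (sh3 1 1 0 F) x y z - sw12 (sh3 0 1 0 F) x y z)"
  by (simp add: Tp12_3_def sh3_def sw12_def E2_3_def D1_3_def E1_3_def S12_3_def Let_def fun_eq_iff)
lemma Tp23_3_eq: "Tp23_3 F = (\<lambda>x y z. F x y z + sh3 0 1 1 F x y z - sh3 0 0 1 F x y z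
   + sw23 F x y z + sw23 (sh3 0 1 1 F) x y z - sw23 (sh3 0 0 1 F) x y z)"
  by (simp add: Tp23_3_def sh3_def sw23_def E3_3_def D2_3_def E2_3_def S23_3_def Let_def fun_eq_iff)
lemma D2_3_eq: "D2_3 F = (\<lambda>x y z. sh3 0 1 0 F x y z - F x y z)"
  by (simp add: D2_3_def E2_3_def sh3_def fun_eq_iff)
lemma E1_3_eq: "E1_3 F = sh3 1 0 0 F"
  by (simp add: E1_3_def sh3_def fun_eq_iff)
lemma E3_3_eq: "E3_3 F = sh3 0 0 1 F"
  by (simp add: E3_3_def sh3_def fun_eq_iff)

lemma msum4_B3: "msum4 f k1 k2 k3 k4 = B3 f k1 k2 (k2+1) k3 (k3+1) k4 + B3 f k1 (k2-1) k2 k2 (k3+1) k4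
   + B3 f k1 k2 (k2+1) (k3-1) k3 k3 + B3 f k1 (k2-1) k2 k2 k3 k3"
  by (simp add: msum4_def msum3_def msum2_def B3_def esum_single)

lemma pt_B3: "F a b c = B3 F a a b b c c"
  by (simp add: B3_def esum_single)

lemma part1:
  fixes f :: "int \<Rightarrow> int \<Rightarrow> int \<Rightarrow> complex"
    and k1 k2 k3 k4 :: int
  shows "Tp23_4 (\<lambda>a b c d. msum4 f a b c d) k1 k2 k3 k4 =
      - (1/2) * ( esum (\<lambda>l1. esum (\<lambda>l2. esum (\<lambda>l3. Tp12_3 f l1 l2 l3) k2 k4) (k2+1) k3) (k2+1) k3
                + esum (\<lambda>l1. esum (\<lambda>l2. esum (\<lambda>l3. Tp23_3 f l1 l2 l3) k2 (k3-1)) k2 (k3-1)) k1 (k2+1) )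
      + (1/2) * ( esum (\<lambda>l1. esum (\<lambda>l2.
                     D2_3 (\<lambda>x y z. Tp12_3 f x y z + E1_3 (Tp12_3 f) x y z) l1 l2 k2) k2 (k3-1)) k2 (k3-1)
                - esum (\<lambda>l2. esum (\<lambda>l3.
                     D2_3 (\<lambda>x y z. Tp23_3 f x y z + E3_3 (Tp23_3 f) x y z) (k2+1) l2 l3) k2 (k3-1)) k2 (k3-1) )
      + (1/2) * ( Tp12_3 f k2 k2 (k2+1) - Tp12_3 f k2 k2 (k3+1) + Tp23_3 f k2 k2 k2 - Tp23_3 f k3 k2 k2 )
      - Tp12_3 f k2 k3 (k2+1) - Tp23_3 f k2 k2 k3"
proof -
  define A where "A = (\<lambda>x y z. Tp12_3 f x y z + E1_3 (Tp12_3 f) x y z)"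
  define B where "B = (\<lambda>x y z. Tp23_3 f x y z + E3_3 (Tp23_3 f) x y z)"
  have e1: "esum (\<lambda>l1. esum (\<lambda>l2. esum (\<lambda>l3. Tp12_3 f l1 l2 l3) k2 k4) (k2+1) k3) (k2+1) k3
      = B3 (Tp12_3 f) (k2+1) k3 (k2+1) k3 k2 k4" by (simp add: B3_def)
  have e2: "esum (\<lambda>l1. esum (\<lambda>l2. esum (\<lambda>l3. Tp23_3 f l1 l2 l3) k2 (k3-1)) k2 (k3-1)) k1 (k2+1)
      = B3 (Tp23_3 f) k1 (k2+1) k2 (k3-1) k2 (k3-1)" by (simp add: B3_def)
  have e3: "esum (\<lambda>l1. esum (\<lambda>l2. D2_3 A l1 l2 k2) k2 (k3-1)) k2 (k3-1)
      = B3 (D2_3 A) k2 (k3-1) k2 (k3-1) k2 k2" by (simp add: B3_def esum_single)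
  have e4: "esum (\<lambda>l2. esum (\<lambda>l3. D2_3 B (k2+1) l2 l3) k2 (k3-1)) k2 (k3-1)
      = B3 (D2_3 B) (k2+1) (k2+1) k2 (k3-1) k2 (k3-1)" by (simp add: B3_def esum_single)
  have lhs: "Tp23_4 (\<lambda>a b c d. msum4 f a b c d) k1 k2 k3 k4 =
     msum4 f k1 k2 k3 k4 + msum4 f k1 (k2+1) (k3+1) k4 - msum4 f k1 k2 (k3+1) k4
   + msum4 f k1 k3 k2 k4 + msum4 f k1 (k3+1) (k2+1) k4 - msum4 f k1 k3 (k2+1) k4"
    by (simp add: Tp23_4_def Let_def E3_4_def D2_4_def E2_4_def S23_4_def)
  have p: "Tp12_3 f k2 k2 (k2+1) = B3 (Tp12_3 f) k2 k2 k2 k2 (k2+1) (k2+1)"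
     "Tp12_3 f k2 k2 (k3+1) = B3 (Tp12_3 f) k2 k2 k2 k2 (k3+1) (k3+1)"
     "Tp23_3 f k2 k2 k2 = B3 (Tp23_3 f) k2 k2 k2 k2 k2 k2"
     "Tp23_3 f k3 k2 k2 = B3 (Tp23_3 f) k3 k3 k2 k2 k2 k2"
     "Tp12_3 f k2 k3 (k2+1) = B3 (Tp12_3 f) k2 k2 k3 k3 (k2+1) (k2+1)"
     "Tp23_3 f k2 k2 k3 = B3 (Tp23_3 f) k2 k2 k2 k2 k3 k3"
    by (simp_all only: pt_B3[symmetric])
  show ?thesis
    unfolding lhs
    unfolding A_def[symmetric] B_def[symmetric] e1 e2 e3 e4 msum4_B3 p
    unfolding A_def B_def
    apply (simp only: Tp12_3_eq Tp23_3_eq D2_3_eq E1_3_eq E3_3_eq B3_add B3_diff B3_sh B3_sw12 B3_sw23)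
    apply (simp only: B3_P[of f])
    apply (simp add: algebra_simps)
    done
qed

definition B2 :: "(int \<Rightarrow> int \<Rightarrow> complex) \<Rightarrow> int \<Rightarrow> int \<Rightarrow> int \<Rightarrow> int \<Rightarrow> complex" where
  "B2 F a1 b1 a2 b2 = esum (\<lambda>x. esum (\<lambda>y. F x y) a2 b2) a1 b1"
definition sh2 :: "int \<Rightarrow> int \<Rightarrow> (int \<Rightarrow> int \<Rightarrow> complex) \<Rightarrow> int \<Rightarrow> int \<Rightarrow> complex" where
  "sh2 a b F = (\<lambda>x y. F (x + a) (y + b))"
definition sw2 :: "(int \<Rightarrow> int \<Rightarrow> complex) \<Rightarrow> int \<Rightarrow> int \<Rightarrow> complex" where
  "sw2 F = (\<lambda>x y. F y x)"
definition P2 :: "(int \<Rightarrow> int \<Rightarrow> complex) \<Rightarrow> int \<Rightarrow> int \<Rightarrow> complex" where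
  "P2 F x y = B2 F 0 x 0 y"

lemma B2_add: "B2 (\<lambda>x y. F x y + G x y) a1 b1 a2 b2 = B2 F a1 b1 a2 b2 + B2 G a1 b1 a2 b2"
  by (simp add: B2_def esum_add)
lemma B2_diff: "B2 (\<lambda>x y. F x y - G x y) a1 b1 a2 b2 = B2 F a1 b1 a2 b2 - B2 G a1 b1 a2 b2"
  by (simp add: B2_def esum_diff)
lemma B2_sh: "B2 (sh2 a b F) a1 b1 a2 b2 = B2 F (a1 + a) (b1 + a) (a2 + b) (b2 + b)"
proof -
  have j: "\<And>x. esum (\<lambda>y. F (x + a) (y + b)) a2 b2 = esum (\<lambda>y. F (x + a) y) (a2 + b) (b2 + b)"
    by (rule esum_shift)
  have k: "esum (\<lambda>x. esum (\<lambda>y. F (x + a) y) (a2 + b) (b2 + b)) a1 b1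
     = esum (\<lambda>x. esum (\<lambda>y. F x y) (a2 + b) (b2 + b)) (a1 + a) (b1 + a)"
    by (rule esum_shift[where F="\<lambda>x. esum (\<lambda>y. F x y) (a2 + b) (b2 + b)"])
  show ?thesis unfolding B2_def sh2_def using j k by simp
qed
lemma B2_sw: "B2 (sw2 F) a1 b1 a2 b2 = B2 F a2 b2 a1 b1"
  unfolding B2_def sw2_def by (rule esum_swap)
lemma B2_P: "B2 F a1 b1 a2 b2 = P2 F b1 b2 - P2 F b1 (a2 - 1) - P2 F (a1 - 1) b2 + P2 F (a1 - 1) (a2 - 1)"
proof -
  have L1: "B2 F a1 b1 a2 b2 = B2 F 0 b1 a2 b2 - B2 F 0 (a1 - 1) a2 b2"
    unfolding B2_def by (rule esum_split)
  have L2: "\<And>t. B2 F 0 t a2 b2 = P2 F t b2 - P2 F t (a2 - 1)"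
    unfolding P2_def B2_def by (subst esum_split[of _ a2], simp add: esum_diff)
  show ?thesis using L1 L2 by simp
qed
lemma Tp12_2_eq: "Tp12_2 F = (\<lambda>x y. F x y + sh2 1 1 F x y - sh2 0 1 F x y
   + sw2 F x y + sw2 (sh2 1 1 F) x y - sw2 (sh2 0 1 F) x y)"
  by (simp add: Tp12_2_def sh2_def sw2_def E2_2_def D1_2_def E1_2_def S12_2_def Let_def fun_eq_iff)
lemma msum3_B2: "msum3 h k1 k2 k3 = B2 h k1 k2 (k2+1) k3 + B2 h k1 (k2-1) k2 k2"
  by (simp add: msum3_def msum2_def B2_def esum_single)

lemma part2:
  fixes h :: "int \<Rightarrow> int \<Rightarrow> complex" and k1 k2 k3 :: int
  shows "Tp12_3 (\<lambda>a b c. msum3 h a b c) k1 k2 k3 =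
      - (1/2) * esum (\<lambda>l1. esum (\<lambda>l2. Tp12_2 h l1 l2) k1 (k2-1)) k1 (k2-1)"
proof -
  have e1: "esum (\<lambda>l1. esum (\<lambda>l2. Tp12_2 h l1 l2) k1 (k2-1)) k1 (k2-1) = B2 (Tp12_2 h) k1 (k2-1) k1 (k2-1)"
    by (simp add: B2_def)
  have lhs: "Tp12_3 (\<lambda>a b c. msum3 h a b c) k1 k2 k3 =
     msum3 h k1 k2 k3 + msum3 h (k1+1) (k2+1) k3 - msum3 h k1 (k2+1) k3
   + msum3 h k2 k1 k3 + msum3 h (k2+1) (k1+1) k3 - msum3 h k2 (k1+1) k3"
    by (simp add: Tp12_3_def Let_def E2_3_def D1_3_def E1_3_def S12_3_def)
  show ?thesis
    unfolding lhs
    unfolding e1 msum3_B2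
    apply (simp only: Tp12_2_eq B2_add B2_diff B2_sh B2_sw)
    apply (simp only: B2_P[of h])
    apply (simp add: algebra_simps)
    done
qed

theorem lemma3:
  fixes f :: "int \<Rightarrow> int \<Rightarrow> int \<Rightarrow> complex"
    and k1 k2 k3 k4 :: int
  shows "(Tp23_4 (\<lambda>a b c d. msum4 f a b c d) k1 k2 k3 k4 =
      - (1/2) * ( esum (\<lambda>l1. esum (\<lambda>l2. esum (\<lambda>l3. Tp12_3 f l1 l2 l3) k2 k4) (k2+1) k3) (k2+1) k3
                + esum (\<lambda>l1. esum (\<lambda>l2. esum (\<lambda>l3. Tp23_3 f l1 l2 l3) k2 (k3-1)) k2 (k3-1)) k1 (k2+1) )
      + (1/2) * ( esum (\<lambda>l1. esum (\<lambda>l2.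
                     D2_3 (\<lambda>x y z. Tp12_3 f x y z + E1_3 (Tp12_3 f) x y z) l1 l2 k2) k2 (k3-1)) k2 (k3-1)
                - esum (\<lambda>l2. esum (\<lambda>l3.
                     D2_3 (\<lambda>x y z. Tp23_3 f x y z + E3_3 (Tp23_3 f) x y z) (k2+1) l2 l3) k2 (k3-1)) k2 (k3-1) )
      + (1/2) * ( Tp12_3 f k2 k2 (k2+1) - Tp12_3 f k2 k2 (k3+1) + Tp23_3 f k2 k2 k2 - Tp23_3 f k3 k2 k2 )
      - Tp12_3 f k2 k3 (k2+1) - Tp23_3 f k2 k2 k3)
   \<and> (\<forall>h :: int \<Rightarrow> int \<Rightarrow> complex. Tp12_3 (\<lambda>a b c. msum3 h a b c) k1 k2 k3 =
      - (1/2) * esum (\<lambda>l1. esum (\<lambda>l2. Tp12_2 h l1 l2) k1 (k2-1)) k1 (k2-1))"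
  using part1[of f k1 k2 k3 k4] part2[of _ k1 k2 k3] by blast

end
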